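(* Let $G$ be a connected edge-stable equimatchable graph and let $v\in V(G)$ be a cut vertex. Then every connected component of $G-v$ that is factor-critical consists of a single vertex.
   Context: All graphs are finite and simple. A graph is equimatchable if all its maximal matchings have the same cardinality; an equimatchable graph $G$ is edge-stable if $G\setminus e$ (delete edge $e$, keep vertices) is equimatchable for every $e\in E(G)$. A graph $H$ is factor-critical if $H-x$ has a perfect matching for every $x\in V(H)$. *)

theory Defs
  imports Main
begin

definition graph :: "'a set \<Rightarrow> 'a set set \<Rightarrow> bool" where
  "graph V E \<longleftrightarrow> finite V \<and> (\<forall>e\<in>E. \<exists>u w. u \<noteq> w \<and> e = {u, w} \<and> u \<in> V \<and> w \<in> V)"

definition matching :: "'a set set \<Rightarrow> 'a set set \<Rightarrow> bool" where
  "matching E M \<longleftrightarrow> M \<subseteq> E \<and> (\<forall>e1\<in>M. \<forall>e2\<in>M. e1 \<noteq> e2 \<longrightarrow> e1 \<inter> e2 = {})"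

definition maximal_matching :: "'a set set \<Rightarrow> 'a set set \<Rightarrow> bool" where
  "maximal_matching E M \<longleftrightarrow> matching E M \<and> (\<forall>M'. matching E M' \<and> M \<subseteq> M' \<longrightarrow> M' = M)"

definition equimatchable :: "'a set \<Rightarrow> 'a set set \<Rightarrow> bool" where
  "equimatchable V E \<longleftrightarrow>
     (\<forall>M1 M2. maximal_matching E M1 \<and> maximal_matching E M2 \<longrightarrow> card M1 = card M2)"

definition edge_stable :: "'a set \<Rightarrow> 'a set set \<Rightarrow> bool" where
  "edge_stable V E \<longleftrightarrow> equimatchable V E \<and> (\<forall>e\<in>E. equimatchable V (E - {e}))"

definition induced_edges :: "'a set set \<Rightarrow> 'a set \<Rightarrow> 'a set set" where
  "induced_edges E S = {e \<in> E. e \<subseteq> S}"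

inductive reachable :: "'a set \<Rightarrow> 'a set set \<Rightarrow> 'a \<Rightarrow> 'a \<Rightarrow> bool"
  for V E where
  refl: "u \<in> V \<Longrightarrow> reachable V E u u"
| step: "reachable V E u w \<Longrightarrow> {w, x} \<in> E \<Longrightarrow> x \<in> V \<Longrightarrow> reachable V E u x"

definition connected :: "'a set \<Rightarrow> 'a set set \<Rightarrow> bool" where
  "connected V E \<longleftrightarrow> V \<noteq> {} \<and> (\<forall>u\<in>V. \<forall>w\<in>V. reachable V E u w)"

definition del_vertex_V :: "'a set \<Rightarrow> 'a \<Rightarrow> 'a set" where
  "del_vertex_V V v = V - {v}"

definition del_vertex_E :: "'a set set \<Rightarrow> 'a \<Rightarrow> 'a set set" where
  "del_vertex_E E v = {e \<in> E. v \<notin> e}"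

definition components :: "'a set \<Rightarrow> 'a set set \<Rightarrow> 'a set set" where
  "components V E = {{w. reachable V E u w} | u. u \<in> V}"

definition cut_vertex :: "'a set \<Rightarrow> 'a set set \<Rightarrow> 'a \<Rightarrow> bool" where
  "cut_vertex V E v \<longleftrightarrow> v \<in> V \<and>
     card (components (del_vertex_V V v) (del_vertex_E E v)) > card (components V E)"

definition perfect_matching :: "'a set \<Rightarrow> 'a set set \<Rightarrow> 'a set set \<Rightarrow> bool" where
  "perfect_matching V E M \<longleftrightarrow> matching E M \<and> \<Union>M = V"

definition factor_critical :: "'a set \<Rightarrow> 'a set set \<Rightarrow> bool" where
  "factor_critical V E \<longleftrightarrow>
     (\<forall>x\<in>V. \<exists>M. perfect_matching (del_vertex_V V x) (del_vertex_E E x) M)"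

end

theory Submission
  imports Defs
begin

lemma graph_finE: "graph V E \<Longrightarrow> finite E"
proof -
  assume g: "graph V E"
  have "E \<subseteq> Pow V" using g unfolding graph_def by auto
  moreover have "finite (Pow V)" using g unfolding graph_def by simp
  ultimately show ?thesis by (rule finite_subset)
qed

lemma graph_edge: "graph V E \<Longrightarrow> f \<in> E \<Longrightarrow> \<exists>u w. u \<noteq> w \<and> f = {u, w} \<and> u \<in> V \<and> w \<in> V"
  by (auto simp: graph_def)

lemma extend_maximal:
  assumes "finite E" "matching E M"
  shows "\<exists>M'. M \<subseteq> M' \<and> maximal_matching E M'"
proof -
  let ?A = "{M'. matching E M' \<and> M \<subseteq> M'}"
  have fin: "finite ?A"
    by (rule finite_subset[of _ "Pow E"]) (auto simp: matching_def assms(1))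
  have "M \<in> ?A" using assms(2) by simp
  from finite_has_maximal2[OF fin this] obtain m where
    m: "m \<in> ?A" "M \<le> m" "\<forall>b\<in>?A. m \<le> b \<longrightarrow> m = b" by blast
  have "maximal_matching E m"
    unfolding maximal_matching_def using m by auto
  then show ?thesis using m by blast
qed

lemma maximal_cover:
  assumes ne: "\<And>f. f \<in> E \<Longrightarrow> f \<noteq> {}" and mm: "maximal_matching E M" and f: "f \<in> E"
  shows "f \<inter> \<Union>M \<noteq> {}"
proof
  assume h: "f \<inter> \<Union>M = {}"
  have "matching E (insert f M)"
    using mm f h unfolding maximal_matching_def matching_def by blast
  then have "insert f M = M" using mm unfolding maximal_matching_def by blast
  then have "f \<subseteq> \<Union>M" by blast
  then show False using h ne[OF f] by blast
qed

lemma cover_maximal: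
  assumes "matching E M" "\<forall>f\<in>E. f \<inter> \<Union>M \<noteq> {}"
  shows "maximal_matching E M"
  unfolding maximal_matching_def
proof (intro conjI allI impI)
  show "matching E M" by fact
  fix M' assume h: "matching E M' \<and> M \<subseteq> M'"
  show "M' = M"
  proof (rule ccontr)
    assume "M' \<noteq> M"
    then obtain f where f: "f \<in> M'" "f \<notin> M" using h by blast
    then have "f \<in> E" using h unfolding matching_def by blast
    then have "f \<inter> \<Union>M \<noteq> {}" using assms(2) by blast
    then obtain z g where zg: "z \<in> f" "z \<in> g" "g \<in> M" by blast
    then have g: "g \<in> M'" "g \<noteq> f" using h f by auto
    have disj: "\<forall>e1\<in>M'. \<forall>e2\<in>M'. e1 \<noteq> e2 \<longrightarrow> e1 \<inter> e2 = {}"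
      using h unfolding matching_def by blast
    then have "f \<inter> g = {}" using g f(1) by blast
    then show False using zg by blast
  qed
qed

lemma match_union:
  assumes "matching E M1" "matching E M2" "\<Union>M1 \<inter> \<Union>M2 = {}"
  shows "matching E (M1 \<union> M2)"
  unfolding matching_def
proof (intro conjI ballI impI)
  have d1: "\<forall>e1\<in>M1. \<forall>e2\<in>M1. e1 \<noteq> e2 \<longrightarrow> e1 \<inter> e2 = {}" and s1: "M1 \<subseteq> E"
    using assms(1) unfolding matching_def by auto
  have d2: "\<forall>e1\<in>M2. \<forall>e2\<in>M2. e1 \<noteq> e2 \<longrightarrow> e1 \<inter> e2 = {}" and s2: "M2 \<subseteq> E"
    using assms(2) unfolding matching_def by auto
  show "M1 \<union> M2 \<subseteq> E" using s1 s2 by simp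
  fix e1 e2 assume e1: "e1 \<in> M1 \<union> M2" and e2: "e2 \<in> M1 \<union> M2" and ne: "e1 \<noteq> e2"
  show "e1 \<inter> e2 = {}"
  proof (cases "e1 \<in> M1")
    case True
    show ?thesis
    proof (cases "e2 \<in> M1")
      case True
      then show ?thesis using d1 \<open>e1 \<in> M1\<close> ne by blast
    next
      case False
      then have "e2 \<subseteq> \<Union>M2" using e2 by blast
      moreover have "e1 \<subseteq> \<Union>M1" using True by blast
      ultimately show ?thesis using assms(3) by blast
    qed
  next
    case False
    then have e1M2: "e1 \<in> M2" using e1 by simp
    show ?thesis
    proof (cases "e2 \<in> M2")
      case True
      then show ?thesis using d2 e1M2 ne by blast
    next
      case False
      then have "e2 \<subseteq> \<Union>M1" using e2 by blast
      moreover have "e1 \<subseteq> \<Union>M2" using e1M2 by blast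
      ultimately show ?thesis using assms(3) by blast
    qed
  qed
qed

lemma match_mono: "matching E M \<Longrightarrow> M \<subseteq> E2 \<Longrightarrow> matching E2 M"
  unfolding matching_def by blast

lemma card_matching:
  assumes g: "graph V E" and m: "matching E M"
  shows "card (\<Union>M) = 2 * card M"
proof -
  have ME: "M \<subseteq> E" using m unfolding matching_def by blast
  have "card (\<Union>M) = sum card M"
  proof (rule card_Union_disjoint)
    show "pairwise disjnt M" using m unfolding matching_def pairwise_def disjnt_def by blast
    fix A assume "A \<in> M"
    then show "finite A" using graph_edge[OF g] ME by blast
  qed
  also have "\<dots> = sum (\<lambda>_. 2) M"
  proof (rule sum.cong)
    fix A assume "A \<in> M"
    then obtain u w where "u \<noteq> w" "A = {u, w}" using graph_edge[OF g] ME by blast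
    then show "card A = 2" by simp
  qed simp
  finally show ?thesis by simp
qed

lemma reach_in: "reachable V E u w \<Longrightarrow> u \<in> V \<and> w \<in> V"
  by (induction rule: reachable.induct) auto

lemma reach_prepend: "reachable V E w u \<Longrightarrow> {x, w} \<in> E \<Longrightarrow> x \<in> V \<Longrightarrow> reachable V E x u"
proof (induction rule: reachable.induct)
  case (refl u)
  have "reachable V E x x" using refl by (simp add: reachable.refl)
  then show ?case by (rule reachable.step) (use refl in auto)
next
  case (step u' w' x')
  have "reachable V E x w'" using step.IH step.prems by blast
  then show ?case by (rule reachable.step) (use step.hyps in auto)
qed

lemma reach_sym: "reachable V E u w \<Longrightarrow> reachable V E w u"
proof (induction rule: reachable.induct)
  case (refl u)
  then show ?case by (rule reachable.refl)
next
  case (step u w x)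
  then show ?case using reach_prepend[of V E w u x] by (simp add: insert_commute)
qed

lemma reach_trans: "reachable V E b c \<Longrightarrow> reachable V E a b \<Longrightarrow> reachable V E a c"
proof (induction rule: reachable.induct)
  case (refl u)
  then show ?case by simp
next
  case (step u w x)
  have "reachable V E a w" using step.IH step.prems by blast
  then show ?case by (rule reachable.step) (use step.hyps in auto)
qed

lemma reach_escape:
  assumes "v \<notin> S" "\<And>z x. z \<in> S \<Longrightarrow> {z, x} \<in> E \<Longrightarrow> x \<in> V \<Longrightarrow> x \<noteq> v \<Longrightarrow> x \<in> S"
    "u \<in> S" "reachable V E u w"
  shows "w \<in> S \<or> (\<exists>d\<in>S. {d, v} \<in> E)"
  using assms(4,3)
proof (induction rule: reachable.induct)
  case (refl u)
  then show ?case by simp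
next
  case (step u w x)
  then show ?case using assms(2) by (cases "x = v") auto
qed

lemma cover_helper:
  assumes "v \<in> f \<or> f \<subseteq> C \<or> f \<subseteq> R" "v \<in> U" "f \<subseteq> R \<Longrightarrow> f \<inter> U \<noteq> {}"
    "C - K \<subseteq> U" "\<not> f \<subseteq> K"
  shows "f \<inter> U \<noteq> {}"
  using assms by blast

theorem lemma4p7:
  fixes V :: "'a set" and E :: "'a set set" and v :: 'a and C :: "'a set"
  assumes "graph V E"
    and "connected V E"
    and "edge_stable V E"
    and "cut_vertex V E v"
    and "C \<in> components (del_vertex_V V v) (del_vertex_E E v)"
    and "factor_critical C (induced_edges (del_vertex_E E v) C)"
  shows "card C = 1"
proof (rule ccontr)
  assume nc: "card C \<noteq> 1"
  note g = assms(1)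
  have finV: "finite V" using g unfolding graph_def by blast
  have finE: "finite E" using graph_finE[OF g] .
  have ne: "\<And>f. f \<in> E \<Longrightarrow> f \<noteq> {}" using graph_edge[OF g] by blast
  let ?V' = "V - {v}"
  let ?E' = "{e \<in> E. v \<notin> e}"
  have vV: "v \<in> V" using assms(4) unfolding cut_vertex_def by blast
  obtain u0 where u0: "u0 \<in> ?V'" and Cdef: "C = {w. reachable ?V' ?E' u0 w}"
    using assms(5) unfolding components_def del_vertex_V_def del_vertex_E_def by blast
  have CV: "C \<subseteq> V - {v}"
  proof
    fix w assume "w \<in> C"
    then have "reachable ?V' ?E' u0 w" using Cdef by blast
    then show "w \<in> V - {v}" using reach_in[of ?V' ?E' u0 w] by blast
  qed
  have u0C: "u0 \<in> C" using Cdef u0 reachable.refl[of u0 ?V' ?E'] by blast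
  have Ccl: "x \<in> C" if "z \<in> C" "{z, x} \<in> E" "x \<in> V" "x \<noteq> v" for z x
  proof -
    have "z \<noteq> v" using that CV by blast
    then have "{z, x} \<in> ?E'" using that by simp
    moreover have "reachable ?V' ?E' u0 z" using that Cdef by blast
    ultimately have "reachable ?V' ?E' u0 x" using that reachable.step[of ?V' ?E' u0 z x] by blast
    then show ?thesis using Cdef by blast
  qed
  have finC: "finite C" using CV finV finite_subset by blast
  have conn: "\<And>a b. a \<in> V \<Longrightarrow> b \<in> V \<Longrightarrow> reachable V E a b"
    using assms(2) unfolding connected_def by blast
  obtain c where cC: "c \<in> C" and cv: "{c, v} \<in> E"
    using reach_escape[of v C E V u0 v] Ccl CV u0C conn[of u0 v] vV by blast
  let ?comp = "components ?V' ?E'"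
  have "components V E \<noteq> {}" using vV unfolding components_def by blast
  moreover have "finite (components V E)"
    unfolding components_def using finV by (simp add: setcompr_eq_image)
  ultimately have "card (components V E) \<ge> 1"
    by (simp add: Suc_leI card_gt_0_iff)
  then have cc: "card ?comp > 1"
    using assms(4) unfolding cut_vertex_def del_vertex_V_def del_vertex_E_def by simp
  obtain C' where C'c: "C' \<in> ?comp" and C'C: "C' \<noteq> C"
  proof -
    have "\<not> ?comp \<subseteq> {C}"
    proof
      assume "?comp \<subseteq> {C}"
      then have "card ?comp \<le> card {C}" by (intro card_mono) auto
      then show False using cc by simp
    qed
    then show ?thesis using that by blast
  qed
  obtain u1 where u1: "u1 \<in> ?V'" and C'def: "C' = {w. reachable ?V' ?E' u1 w}"
    using C'c unfolding components_def by blast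
  have u1C: "u1 \<notin> C"
  proof
    assume "u1 \<in> C"
    then have r: "reachable ?V' ?E' u0 u1" using Cdef by blast
    have "C' = C"
      unfolding C'def Cdef
      using reach_trans[of ?V' ?E' u1 _ u0] reach_trans[of ?V' ?E' u0 _ u1] r reach_sym[OF r]
      by blast
    then show False using C'C by blast
  qed
  let ?S = "V - {v} - C"
  have Scl: "x \<in> ?S" if "z \<in> ?S" "{z, x} \<in> E" "x \<in> V" "x \<noteq> v" for z x
  proof -
    have "x \<notin> C"
    proof
      assume "x \<in> C"
      moreover have "{x, z} \<in> E" using that by (simp add: insert_commute)
      ultimately have "z \<in> C" using Ccl that by blast
      then show False using that by blast
    qed
    then show ?thesis using that by blast
  qed
  obtain d where dS: "d \<in> ?S" and dv: "{d, v} \<in> E"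
    using reach_escape[of v ?S E V u1 v] Scl u1 u1C conn[of u1 v] vV by blast
  have cls: "v \<in> f \<or> f \<subseteq> C \<or> f \<subseteq> V - C - {v}" if fE: "f \<in> E" for f
  proof -
    obtain a b where ab: "a \<noteq> b" "f = {a, b}" "a \<in> V" "b \<in> V" using graph_edge[OF g fE] by blast
    show ?thesis
    proof (cases "v \<in> f")
      case False
      then have "a \<noteq> v" "b \<noteq> v" using ab by auto
      moreover have "a \<in> C \<Longrightarrow> b \<in> C" using Ccl ab fE calculation by blast
      moreover have "b \<in> C \<Longrightarrow> a \<in> C" using Ccl[of b a] ab fE calculation by (simp add: insert_commute)
      ultimately show ?thesis using ab by (cases "a \<in> C") auto
    qed simp
  qed
  have fc: "\<exists>M. matching E M \<and> \<Union>M = C - {x}" if xC0: "x \<in> C" for x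
  proof -
    have "\<exists>M. perfect_matching (del_vertex_V C x) (del_vertex_E (induced_edges (del_vertex_E E v) C) x) M"
      using assms(6) xC0 unfolding factor_critical_def by blast
    then obtain M where pm: "perfect_matching (del_vertex_V C x) (del_vertex_E (induced_edges (del_vertex_E E v) C) x) M"
      by blast
    have "M \<subseteq> E" using pm unfolding perfect_matching_def matching_def del_vertex_E_def induced_edges_def
      by blast
    moreover have "matching E M" using pm calculation unfolding perfect_matching_def matching_def by blast
    moreover have "\<Union>M = C - {x}" using pm unfolding perfect_matching_def del_vertex_V_def by blast
    ultimately show ?thesis by blast
  qed
  obtain Mc where Mc: "matching E Mc" "\<Union>Mc = C - {c}" using fc cC by blast
  obtain z where zC: "z \<in> C" "z \<noteq> c"
  proof -
    have "C \<noteq> {c}" using nc by auto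
    then show ?thesis using that cC by blast
  qed
  obtain e where eMc: "e \<in> Mc" and ze: "z \<in> e" using Mc zC by blast
  have eE: "e \<in> E" using eMc Mc unfolding matching_def by blast
  obtain x y where xy: "x \<noteq> y" "e = {x, y}" using graph_edge[OF g eE] by blast
  have eC: "e \<subseteq> C - {c}" using eMc Mc by blast
  have xC: "x \<in> C" "x \<noteq> c" using eC xy by auto
  obtain Mx where Mx: "matching E Mx" "\<Union>Mx = C - {x}" using fc xC by blast
  let ?EP = "{f \<in> E. f \<subseteq> V - C}"
  let ?ER = "{f \<in> E. f \<subseteq> V - C - {v}}"
  have vdE: "{v, d} \<in> E" using dv by (simp add: insert_commute)
  have "matching ?EP {{v, d}}" using vdE dS vV CV unfolding matching_def by auto
  then obtain P where P: "{{v, d}} \<subseteq> P" "maximal_matching ?EP P"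
    using extend_maximal[of ?EP] finE by auto
  have "matching ?ER {}" unfolding matching_def by simp
  then obtain N where N: "maximal_matching ?ER N"
    using extend_maximal[of ?ER] finE by auto
  have Pm: "matching E P" using P(2) unfolding maximal_matching_def matching_def by blast
  have Nm: "matching E N" using N unfolding maximal_matching_def matching_def by blast
  have PU: "\<Union>P \<subseteq> V - C" using P(2) unfolding maximal_matching_def matching_def by blast
  have NU: "\<Union>N \<subseteq> V - C - {v}" using N unfolding maximal_matching_def matching_def by blast
  have vP: "v \<in> \<Union>P" using P(1) by blast
  have Pcov: "f \<inter> \<Union>P \<noteq> {}" if "f \<in> E" "f \<subseteq> V - C" for f
    using maximal_cover[of ?EP P f] P(2) ne that by blast
  have Ncov: "f \<inter> \<Union>N \<noteq> {}" if "f \<in> E" "f \<subseteq> V - C - {v}" for f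
    using maximal_cover[of ?ER N f] N ne that by blast
  have vc: "{v, c} \<in> E" using cv by (simp add: insert_commute)
  have vcm: "matching E {{v, c}}" using vc unfolding matching_def by blast
  have vnC: "v \<notin> C" using CV by blast
  define A0 where "A0 = {{v, c}} \<union> (Mc \<union> N)"
  define A where "A = {{v, c}} \<union> ((Mc - {e}) \<union> N)"
  define B0 where "B0 = Mc \<union> P"
  define B where "B = Mx \<union> P"
  have McN: "matching E (Mc \<union> N)" by (rule match_union[OF Mc(1) Nm]) (use Mc NU in blast)
  have A0m: "matching E A0" unfolding A0_def
    by (rule match_union[OF vcm McN]) (use Mc NU vnC cC in auto)
  have McN': "matching E ((Mc - {e}) \<union> N)"
    by (rule match_union) (use Mc NU Nm in \<open>auto simp: matching_def\<close>)
  have Am: "matching E A" unfolding A_def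
    by (rule match_union[OF vcm McN']) (use Mc NU vnC cC in auto)
  have B0m: "matching E B0" unfolding B0_def
    by (rule match_union[OF Mc(1) Pm]) (use Mc PU in blast)
  have Bm: "matching E B" unfolding B_def
    by (rule match_union[OF Mx(1) Pm]) (use Mx PU in blast)
  have A0max: "maximal_matching E A0"
  proof (rule cover_maximal[OF A0m], intro ballI)
    fix f assume f: "f \<in> E"
    have U: "\<Union>A0 = {v, c} \<union> (C - {c}) \<union> \<Union>N" unfolding A0_def using Mc by auto
    show "f \<inter> \<Union>A0 \<noteq> {}"
    proof (rule cover_helper[OF cls[OF f]])
      show "v \<in> \<Union>A0" using U by blast
      show "f \<subseteq> V - C - {v} \<Longrightarrow> f \<inter> \<Union>A0 \<noteq> {}" using Ncov[OF f] U by blast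
      show "C - {} \<subseteq> \<Union>A0" using U by blast
      show "\<not> f \<subseteq> {}" using ne[OF f] by blast
    qed
  qed
  have B0max: "maximal_matching E B0"
  proof (rule cover_maximal[OF B0m], intro ballI)
    fix f assume f: "f \<in> E"
    obtain a b where ab: "a \<noteq> b" "f = {a, b}" using graph_edge[OF g f] by blast
    have U: "\<Union>B0 = (C - {c}) \<union> \<Union>P" unfolding B0_def using Mc by auto
    show "f \<inter> \<Union>B0 \<noteq> {}"
    proof (rule cover_helper[OF cls[OF f]])
      show "v \<in> \<Union>B0" using U vP by blast
      show "f \<subseteq> V - C - {v} \<Longrightarrow> f \<inter> \<Union>B0 \<noteq> {}" using Pcov[OF f] U by blast
      show "C - {c} \<subseteq> \<Union>B0" using U by blast
      show "\<not> f \<subseteq> {c}" using ab by blast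
    qed
  qed
  have eA: "e \<notin> A"
  proof
    assume "e \<in> A"
    moreover have "e \<noteq> {v, c}" using eC vnC by blast
    moreover have "e \<notin> N" using NU eC ze by blast
    ultimately show False unfolding A_def by blast
  qed
  have A0A: "A0 = insert e A" unfolding A0_def A_def using eMc by blast
  have finA: "finite A" using Am finE unfolding matching_def using finite_subset by blast
  have cA0: "card A0 = card A + 1" using A0A eA finA by simp
  have Amax: "maximal_matching (E - {e}) A"
  proof (rule cover_maximal)
    show "matching (E - {e}) A" using Am eA unfolding matching_def by blast
    show "\<forall>f\<in>E - {e}. f \<inter> \<Union>A \<noteq> {}"
    proof
      fix f assume f: "f \<in> E - {e}"
      then have fE: "f \<in> E" and fne: "f \<noteq> e" by auto
      obtain a b where ab: "a \<noteq> b" "f = {a, b}" using graph_edge[OF g fE] by blast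
      have U: "{v, c} \<union> (C - {c} - e) \<union> \<Union>N \<subseteq> \<Union>A"
      proof -
        have "C - {c} - e \<subseteq> \<Union>(Mc - {e})" using Mc by blast
        then show ?thesis unfolding A_def by blast
      qed
      have nfe: "\<not> f \<subseteq> e"
      proof
        assume "f \<subseteq> e"
        then have "a \<in> {x, y}" "b \<in> {x, y}" using ab xy by auto
        then have "f = e" using ab xy by auto
        then show False using fne by blast
      qed
      show "f \<inter> \<Union>A \<noteq> {}"
      proof (rule cover_helper[OF cls[OF fE]])
        show "v \<in> \<Union>A" using U by blast
        show "f \<subseteq> V - C - {v} \<Longrightarrow> f \<inter> \<Union>A \<noteq> {}" using Ncov[OF fE] U by blast
        show "C - e \<subseteq> \<Union>A" using U by blast
        show "\<not> f \<subseteq> e" by (rule nfe)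
      qed
    qed
  qed
  have Bmax: "maximal_matching (E - {e}) B"
  proof (rule cover_maximal)
    have "e \<notin> Mx" using Mx xy by blast
    moreover have "e \<notin> P" using PU eC ze by blast
    ultimately show "matching (E - {e}) B" using Bm unfolding B_def matching_def by blast
    show "\<forall>f\<in>E - {e}. f \<inter> \<Union>B \<noteq> {}"
    proof
      fix f assume f: "f \<in> E - {e}"
      then have fE: "f \<in> E" by auto
      obtain a b where ab: "a \<noteq> b" "f = {a, b}" using graph_edge[OF g fE] by blast
      have U: "\<Union>B = (C - {x}) \<union> \<Union>P" unfolding B_def using Mx by auto
      show "f \<inter> \<Union>B \<noteq> {}"
      proof (rule cover_helper[OF cls[OF fE]])
        show "v \<in> \<Union>B" using U vP by blast
        show "f \<subseteq> V - C - {v} \<Longrightarrow> f \<inter> \<Union>B \<noteq> {}" using Pcov[OF fE] U by blast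
        show "C - {x} \<subseteq> \<Union>B" using U by blast
        show "\<not> f \<subseteq> {x}" using ab by blast
      qed
    qed
  qed
  have finP: "finite P" using Pm finE unfolding matching_def using finite_subset by blast
  have finMc: "finite Mc" using Mc(1) finE unfolding matching_def using finite_subset by blast
  have finMx: "finite Mx" using Mx(1) finE unfolding matching_def using finite_subset by blast
  have "2 * card Mc = card (C - {c})" using card_matching[OF g Mc(1)] Mc(2) by simp
  moreover have "2 * card Mx = card (C - {x})" using card_matching[OF g Mx(1)] Mx(2) by simp
  ultimately have cMcx: "card Mc = card Mx" using cC xC finC by simp
  have dMcP: "Mc \<inter> P = {}"
  proof -
    have "\<And>f. f \<in> Mc \<Longrightarrow> f \<in> P \<Longrightarrow> False"
    proof -
      fix f assume f1: "f \<in> Mc" and f2: "f \<in> P"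
      have "f \<subseteq> C" using f1 Mc(2) by blast
      moreover have "f \<subseteq> V - C" using f2 PU by blast
      moreover have "f \<in> E" using f2 Pm unfolding matching_def by blast
      ultimately show False using ne by blast
    qed
    then show ?thesis by blast
  qed
  have dMxP: "Mx \<inter> P = {}"
  proof -
    have "\<And>f. f \<in> Mx \<Longrightarrow> f \<in> P \<Longrightarrow> False"
    proof -
      fix f assume f1: "f \<in> Mx" and f2: "f \<in> P"
      have "f \<subseteq> C" using f1 Mx(2) by blast
      moreover have "f \<subseteq> V - C" using f2 PU by blast
      moreover have "f \<in> E" using f2 Pm unfolding matching_def by blast
      ultimately show False using ne by blast
    qed
    then show ?thesis by blast
  qed
  have "card B0 = card B"
    unfolding B0_def B_def using card_Un_disjoint[OF finMc finP dMcP] card_Un_disjoint[OF finMx finP dMxP] cMcx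
    by simp
  moreover have "card A0 = card B0"
    using assms(3) A0max B0max unfolding edge_stable_def equimatchable_def by blast
  moreover have "card A = card B"
    using assms(3) Amax Bmax eE unfolding edge_stable_def equimatchable_def by blast
  ultimately show False using cA0 by simp
qed

end
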